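(* Let $M$ be a nonnegative integer, $k=(k_\alpha)_{\alpha\in R^-}\in\mathbb N^{q-1}$ with $\sum_{\alpha\in R^-}\alpha\cdot k_\alpha=0$ in $R$, and $\Gamma$ a finite index set. Suppose that for each $\alpha\in R^-$ and $i\in\Gamma$ we are given nonnegative integers $x_i^{(\alpha)}$ such that $\sum_{i\in\Gamma}x_i^{(\alpha)}=k_\alpha M$ for all $\alpha\in R^-$ and $\sum_{\alpha\in R^-}x_i^{(\alpha)}\le M$ for all $i\in\Gamma$. Then there exist nonnegative integers $w_a$, $a\in\mathcal C_\Gamma^{(k)}$, such that $\sum_{a\in\mathcal C_\Gamma^{(k)}}w_a=M$ and, for all $\alpha\in R^-$ and $i\in\Gamma$, $x_i^{(\alpha)}=\sum_{a\in\mathcal C_\Gamma^{(k)},\,a_i=\alpha}w_a$.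
   Context: $R$ is a finite ring with $q$ elements, $R^-=R\setminus\{0\}$. For $\alpha\in R$ and $k\in\mathbb N$, $\alpha\cdot k$ denotes the $k$-fold sum $\alpha+\cdots+\alpha$ (equal to $0$ if $k=0$). For a finite index set $\Gamma$, $\mathcal C_\Gamma=\{a=(a_i)_{i\in\Gamma}\in R^\Gamma:\sum_{i\in\Gamma}a_i=0\}$, $\kappa_\Gamma(a)\in\mathbb N^{q-1}$ has coordinates $\kappa_\Gamma(a)_\alpha=|\{i\in\Gamma:a_i=\alpha\}|$ ($\alpha\in R^-$), and $\mathcal C_\Gamma^{(k)}=\{a\in\mathcal C_\Gamma:\kappa_\Gamma(a)=k\}$. *)

theory Defs
  imports Main
begin

definition rep_add :: "'a::comm_monoid_add \<Rightarrow> nat \<Rightarrow> 'a" where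
  "rep_add \<alpha> k = (\<Sum>j<k. \<alpha>)"

text \<open>Vectors in R^Gamma are functions vanishing outside Gamma.\<close>
definition CC :: "'i set \<Rightarrow> ('i \<Rightarrow> 'a::ring_1) set" where
  "CC \<Gamma> = {a. (\<forall>i. i \<notin> \<Gamma> \<longrightarrow> a i = 0) \<and> (\<Sum>i\<in>\<Gamma>. a i) = 0}"

definition kappa :: "'i set \<Rightarrow> ('i \<Rightarrow> 'a::ring_1) \<Rightarrow> 'a \<Rightarrow> nat" where
  "kappa \<Gamma> a \<alpha> = card {i\<in>\<Gamma>. a i = \<alpha>}"

text \<open>C_Gamma^(k); only the values of k on nonzero ring elements matter.\<close>
definition CCk :: "'i set \<Rightarrow> ('a::ring_1 \<Rightarrow> nat) \<Rightarrow> ('i \<Rightarrow> 'a) set" where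
  "CCk \<Gamma> k = {a\<in>CC \<Gamma>. \<forall>\<alpha>. \<alpha> \<noteq> 0 \<longrightarrow> kappa \<Gamma> a \<alpha> = k \<alpha>}"

end

theory Submission
  imports Defs "HOL-Library.FuncSet"
begin


lemma hall:
  fixes A :: "'p set" and F :: "'p \<Rightarrow> 'b set" and B :: "'b set"
  assumes "finite A" "finite B" "\<And>p. p \<in> A \<Longrightarrow> F p \<subseteq> B"
    and "\<And>S. S \<subseteq> A \<Longrightarrow> card S \<le> card (\<Union>(F ` S))"
  shows "\<exists>g. inj_on g A \<and> (\<forall>p\<in>A. g p \<in> F p)"
  using assms
proof (induction "card A" arbitrary: A F rule: less_induct)
  case less
  note fin = `finite A` `finite B`
  have finU: "\<And>S. S \<subseteq> A \<Longrightarrow> finite (\<Union>(F ` S))"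
    using less.prems(3) fin by (meson UN_least finite_subset subset_iff)
  show ?case
  proof (cases "A = {}")
    case True then show ?thesis by auto
  next
    case nonempty: False
    show ?thesis
    proof (cases "\<exists>S. S \<subseteq> A \<and> S \<noteq> {} \<and> S \<noteq> A \<and> card (\<Union>(F ` S)) \<le> card S")
      case True
      then obtain S where S: "S \<subseteq> A" "S \<noteq> {}" "S \<noteq> A" "card (\<Union>(F ` S)) \<le> card S" by blast
      have Sfin: "finite S" using S(1) fin finite_subset by blast
      have cS: "card S < card A" using S fin psubset_card_mono by blast
      have "\<exists>g. inj_on g S \<and> (\<forall>p\<in>S. g p \<in> F p)"
        apply (rule less.hyps[OF cS Sfin fin(2)])
        using less.prems S by auto
      then obtain g1 where g1: "inj_on g1 S" "\<forall>p\<in>S. g1 p \<in> F p" by blast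
      define U where "U = \<Union>(F ` S)"
      have cU: "card U = card S" using S(4) less.prems(4)[OF S(1)] unfolding U_def by simp
      define F2 where "F2 p = F p - U" for p
      have cA: "card (A - S) < card A" proof -
        have "card S > 0" using Sfin S(2) by (simp add: card_gt_0_iff)
        moreover have "card S \<le> card A" using S(1) fin(1) by (rule card_mono[rotated])
        ultimately show ?thesis using card_Diff_subset[OF Sfin S(1)] by linarith
      qed
      have "\<exists>g. inj_on g (A - S) \<and> (\<forall>p\<in>A - S. g p \<in> F2 p)"
      proof (rule less.hyps[OF cA _ fin(2)])
        show "finite (A - S)" using fin by simp
        show "\<And>p. p \<in> A - S \<Longrightarrow> F2 p \<subseteq> B" using less.prems(3) unfolding F2_def by auto
        fix T assume T: "T \<subseteq> A - S"
        have e: "\<Union>(F2 ` T) = \<Union>(F ` (T \<union> S)) - U" unfolding F2_def U_def by auto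
        have TS: "T \<union> S \<subseteq> A" using T S by auto
        have "U \<subseteq> \<Union>(F ` (T \<union> S))" unfolding U_def by auto
        hence "card (\<Union>(F2 ` T)) = card (\<Union>(F ` (T \<union> S))) - card U"
          unfolding e using finU[OF TS] by (simp add: card_Diff_subset finite_subset)
        moreover have "card (T \<union> S) = card T + card S"
          proof (rule card_Un_disjoint)
          show "finite T" using T fin(1) finite_subset by blast
        qed (use T Sfin in auto)
        moreover have "card (T \<union> S) \<le> card (\<Union>(F ` (T \<union> S)))" using less.prems(4)[OF TS] .
        ultimately show "card T \<le> card (\<Union>(F2 ` T))" using cU by linarith
      qed
      then obtain g2 where g2: "inj_on g2 (A - S)" "\<forall>p\<in>A - S. g2 p \<in> F2 p" by blast
      define g where "g p = (if p \<in> S then g1 p else g2 p)" for p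
      have "inj_on g A"
        unfolding inj_on_def
      proof (intro ballI impI)
        fix p p' assume p: "p \<in> A" "p' \<in> A" "g p = g p'"
        show "p = p'"
        proof (cases "p \<in> S"; cases "p' \<in> S")
          assume "p \<in> S" "p' \<in> S" thus ?thesis using p g1(1) unfolding g_def inj_on_def by auto
        next
          assume "p \<notin> S" "p' \<notin> S" thus ?thesis using p g2(1) unfolding g_def inj_on_def by auto
        next
          assume a: "p \<in> S" "p' \<notin> S"
          hence "g p \<in> U" using g1 unfolding g_def U_def by auto
          moreover have "g p' \<notin> U" using a g2 p(2) unfolding g_def F2_def by auto
          ultimately show ?thesis using p by simp
        next
          assume a: "p \<notin> S" "p' \<in> S"
          hence "g p' \<in> U" using g1 unfolding g_def U_def by auto
          moreover have "g p \<notin> U" using a g2 p(1) unfolding g_def F2_def by auto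
          ultimately show ?thesis using p by simp
        qed
      qed
      moreover have "\<forall>p\<in>A. g p \<in> F p" using g1 g2 unfolding g_def F2_def by auto
      ultimately show ?thesis by blast
    next
      case False
      hence strict: "\<And>S. S \<subseteq> A \<Longrightarrow> S \<noteq> {} \<Longrightarrow> S \<noteq> A \<Longrightarrow> card S < card (\<Union>(F ` S))"
        by (meson not_le)
      obtain a where a: "a \<in> A" using nonempty by blast
      have "card {a} \<le> card (F a)" using less.prems(4)[of "{a}"] a by simp
      hence "F a \<noteq> {}" by auto
      then obtain b where b: "b \<in> F a" by blast
      define F' where "F' p = F p - {b}" for p
      have cA: "card (A - {a}) < card A" using a fin card_gt_0_iff[of A] by auto
      have "\<exists>g. inj_on g (A - {a}) \<and> (\<forall>p\<in>A - {a}. g p \<in> F' p)"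
      proof (rule less.hyps[OF cA _ fin(2)])
        show "finite (A - {a})" using fin by simp
        show "\<And>p. p \<in> A - {a} \<Longrightarrow> F' p \<subseteq> B" using less.prems(3) unfolding F'_def by auto
        fix T assume T: "T \<subseteq> A - {a}"
        show "card T \<le> card (\<Union>(F' ` T))"
        proof (cases "T = {}")
          case True then show ?thesis by simp
        next
          case False
          have TA: "T \<subseteq> A" "T \<noteq> A" using T a by auto
          have lt: "card T < card (\<Union>(F ` T))" using strict[OF TA(1) False TA(2)] .
          have "\<Union>(F' ` T) = \<Union>(F ` T) - {b}" unfolding F'_def by auto
          hence "card (\<Union>(F' ` T)) \<ge> card (\<Union>(F ` T)) - 1"
            using finU[OF TA(1)] by (simp add: card_Diff_singleton_if)
          thus ?thesis using lt by linarith
        qed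
      qed
      then obtain g' where g': "inj_on g' (A - {a})" "\<forall>p\<in>A - {a}. g' p \<in> F' p" by blast
      define g where "g = g'(a := b)"
      have "inj_on g A"
        unfolding inj_on_def
      proof (intro ballI impI)
        fix p p' assume p: "p \<in> A" "p' \<in> A" "g p = g p'"
        show "p = p'"
        proof (cases "p = a"; cases "p' = a")
          assume "p = a" "p' \<noteq> a"
          thus ?thesis using p g' unfolding g_def F'_def by force
        next
          assume "p \<noteq> a" "p' = a"
          thus ?thesis using p g' unfolding g_def F'_def by force
        next
          assume "p \<noteq> a" "p' \<noteq> a"
          thus ?thesis using p g'(1) unfolding g_def inj_on_def by auto
        qed simp
      qed
      moreover have "\<forall>p\<in>A. g p \<in> F p" using g' b unfolding g_def F'_def by auto
      ultimately show ?thesis by blast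
    qed
  qed
qed



lemma matching:
  fixes x :: "'a::finite \<Rightarrow> 'i \<Rightarrow> nat" and \<Gamma> :: "'i set"
  assumes fin: "finite \<Gamma>" and row: "\<And>\<alpha>. (\<Sum>i\<in>\<Gamma>. x \<alpha> i) = kk \<alpha> * M"
    and col: "\<And>i. i \<in> \<Gamma> \<Longrightarrow> (\<Sum>\<alpha>\<in>UNIV. x \<alpha> i) = M" and M: "M > 0"
  shows "\<exists>f. (\<forall>\<alpha>. card {i\<in>\<Gamma>. f i = \<alpha>} = kk \<alpha>) \<and> (\<forall>i\<in>\<Gamma>. x (f i) i > 0)"
proof -
  define A where "A = Sigma (UNIV::'a set) (\<lambda>\<alpha>. {..<kk \<alpha>})"
  define F where "F p = {i\<in>\<Gamma>. x (fst p) i > 0}" for p :: "'a \<times> nat"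
  have finA: "finite A" unfolding A_def by auto
  have cardA: "card A = (\<Sum>\<alpha>\<in>UNIV. kk \<alpha>)" unfolding A_def by (simp add: card_SigmaI)
  have "(\<Sum>\<alpha>\<in>UNIV. kk \<alpha>) * M = (\<Sum>\<alpha>\<in>UNIV. \<Sum>i\<in>\<Gamma>. x \<alpha> i)" by (simp add: row sum_distrib_right)
  also have "\<dots> = (\<Sum>i\<in>\<Gamma>. \<Sum>\<alpha>\<in>UNIV. x \<alpha> i)" by (rule sum.swap)
  also have "\<dots> = card \<Gamma> * M" using col by simp
  finally have sumkk: "(\<Sum>\<alpha>\<in>UNIV. kk \<alpha>) = card \<Gamma>" using M by simp
  have "\<exists>g. inj_on g A \<and> (\<forall>p\<in>A. g p \<in> F p)"
  proof (rule hall[OF finA fin])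
    show "\<And>p. p \<in> A \<Longrightarrow> F p \<subseteq> \<Gamma>" unfolding F_def by auto
    fix S assume S: "S \<subseteq> A"
    define T where "T = fst ` S"
    define N where "N = {i\<in>\<Gamma>. \<exists>\<alpha>\<in>T. x \<alpha> i > 0}"
    have UN: "\<Union>(F ` S) = N" unfolding N_def T_def F_def by auto
    have "S \<subseteq> Sigma T (\<lambda>\<alpha>. {..<kk \<alpha>})" using S unfolding A_def T_def by force
    hence "card S \<le> card (Sigma T (\<lambda>\<alpha>. {..<kk \<alpha>}))" by (intro card_mono) auto
    also have "\<dots> = (\<Sum>\<alpha>\<in>T. kk \<alpha>)" by (simp add: card_SigmaI)
    finally have c1: "card S \<le> (\<Sum>\<alpha>\<in>T. kk \<alpha>)" .
    have NG: "N \<subseteq> \<Gamma>" unfolding N_def by auto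
    have "(\<Sum>\<alpha>\<in>T. kk \<alpha>) * M = (\<Sum>\<alpha>\<in>T. \<Sum>i\<in>\<Gamma>. x \<alpha> i)" by (simp add: row sum_distrib_right)
    also have "\<dots> = (\<Sum>\<alpha>\<in>T. \<Sum>i\<in>N. x \<alpha> i)"
    proof (rule sum.cong[OF refl])
      fix \<alpha> assume "\<alpha> \<in> T"
      thus "(\<Sum>i\<in>\<Gamma>. x \<alpha> i) = (\<Sum>i\<in>N. x \<alpha> i)"
        by (intro sum.mono_neutral_right[OF fin NG]) (auto simp: N_def)
    qed
    also have "\<dots> \<le> (\<Sum>\<alpha>\<in>UNIV. \<Sum>i\<in>N. x \<alpha> i)" by (rule sum_mono2) auto
    also have "\<dots> = (\<Sum>i\<in>N. \<Sum>\<alpha>\<in>UNIV. x \<alpha> i)" by (rule sum.swap)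
    also have "\<dots> = card N * M" using col NG by (simp add: subset_iff)
    finally have "(\<Sum>\<alpha>\<in>T. kk \<alpha>) \<le> card N" using M by simp
    thus "card S \<le> card (\<Union>(F ` S))" using c1 UN by simp
  qed
  then obtain g where g: "inj_on g A" "\<forall>p\<in>A. g p \<in> F p" by blast
  have gA: "g ` A \<subseteq> \<Gamma>" using g(2) unfolding F_def by auto
  have "card (g ` A) = card \<Gamma>" using card_image[OF g(1)] cardA sumkk by simp
  hence gA2: "g ` A = \<Gamma>" using gA fin by (simp add: card_subset_eq)
  define f where "f i = fst (the_inv_into A g i)" for i
  have inv: "\<And>i. i \<in> \<Gamma> \<Longrightarrow> the_inv_into A g i \<in> A \<and> g (the_inv_into A g i) = i"
    using g(1) gA2 by (metis f_the_inv_into_f the_inv_into_into subset_refl)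
  show ?thesis
  proof (intro exI conjI allI ballI)
    fix i assume i: "i \<in> \<Gamma>"
    show "x (f i) i > 0" using inv[OF i] g(2) unfolding f_def F_def by force
  next
    fix \<alpha>
    have "{i\<in>\<Gamma>. f i = \<alpha>} = g ` {p\<in>A. fst p = \<alpha>}"
    proof
      show "{i\<in>\<Gamma>. f i = \<alpha>} \<subseteq> g ` {p\<in>A. fst p = \<alpha>}"
      proof
        fix i assume "i \<in> {i\<in>\<Gamma>. f i = \<alpha>}"
        thus "i \<in> g ` {p\<in>A. fst p = \<alpha>}" using inv unfolding f_def by (metis (mono_tags, lifting) image_eqI mem_Collect_eq)
      qed
      show "g ` {p\<in>A. fst p = \<alpha>} \<subseteq> {i\<in>\<Gamma>. f i = \<alpha>}"
        using gA the_inv_into_f_f[OF g(1)] unfolding f_def by auto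
    qed
    hence "card {i\<in>\<Gamma>. f i = \<alpha>} = card {p\<in>A. fst p = \<alpha>}"
      proof -
      assume e: "{i\<in>\<Gamma>. f i = \<alpha>} = g ` {p\<in>A. fst p = \<alpha>}"
      have "inj_on g {p\<in>A. fst p = \<alpha>}" using g(1) by (rule inj_on_subset) auto
      thus ?thesis unfolding e by (rule card_image)
    qed
    also have "{p\<in>A. fst p = \<alpha>} = {\<alpha>} \<times> {..<kk \<alpha>}" unfolding A_def by auto
    finally show "card {i\<in>\<Gamma>. f i = \<alpha>} = kk \<alpha>" by simp
  qed
qed

lemma decomp:
  fixes x :: "'a::finite \<Rightarrow> 'i \<Rightarrow> nat" and \<Gamma> :: "'i set"
  assumes fin: "finite \<Gamma>" and row: "\<And>\<alpha>. (\<Sum>i\<in>\<Gamma>. x \<alpha> i) = kk \<alpha> * M"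
    and col: "\<And>i. i \<in> \<Gamma> \<Longrightarrow> (\<Sum>\<alpha>\<in>UNIV. x \<alpha> i) = M"
  shows "\<exists>fs. length fs = M \<and> (\<forall>f\<in>set fs. \<forall>\<alpha>. card {i\<in>\<Gamma>. f i = \<alpha>} = kk \<alpha>)
     \<and> (\<forall>\<alpha>. \<forall>i\<in>\<Gamma>. x \<alpha> i = length (filter (\<lambda>f. f i = \<alpha>) fs))"
  using row col
proof (induction M arbitrary: x)
  case 0
  have "\<And>\<alpha> i. i \<in> \<Gamma> \<Longrightarrow> x \<alpha> i = 0" using 0(2) by simp
  thus ?case by auto
next
  case (Suc M)
  obtain f where f: "\<forall>\<alpha>. card {i\<in>\<Gamma>. f i = \<alpha>} = kk \<alpha>" "\<forall>i\<in>\<Gamma>. x (f i) i > 0"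
    using matching[OF fin Suc.prems] by auto
  define x' where "x' \<alpha> i = x \<alpha> i - (if f i = \<alpha> then 1 else 0)" for \<alpha> i
  have xx: "\<And>\<alpha> i. i \<in> \<Gamma> \<Longrightarrow> x \<alpha> i = x' \<alpha> i + (if f i = \<alpha> then 1 else 0)"
    using f(2) unfolding x'_def by fastforce
  have "\<exists>fs. length fs = M \<and> (\<forall>f\<in>set fs. \<forall>\<alpha>. card {i\<in>\<Gamma>. f i = \<alpha>} = kk \<alpha>)
     \<and> (\<forall>\<alpha>. \<forall>i\<in>\<Gamma>. x' \<alpha> i = length (filter (\<lambda>f. f i = \<alpha>) fs))"
  proof (rule Suc.IH)
    fix \<alpha>
    have "(\<Sum>i\<in>\<Gamma>. x \<alpha> i) = (\<Sum>i\<in>\<Gamma>. x' \<alpha> i) + (\<Sum>i\<in>\<Gamma>. (if f i = \<alpha> then 1 else 0))"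
      using xx by (simp add: sum.distrib)
    also have "(\<Sum>i\<in>\<Gamma>. (if f i = \<alpha> then 1 else 0::nat)) = kk \<alpha>"
      using f(1) fin by (simp add: sum.If_cases Int_def)
    finally show "(\<Sum>i\<in>\<Gamma>. x' \<alpha> i) = kk \<alpha> * M" using Suc.prems(1)[of \<alpha>] by simp
  next
    fix i assume i: "i \<in> \<Gamma>"
    have "(\<Sum>\<alpha>\<in>UNIV. x \<alpha> i) = (\<Sum>\<alpha>\<in>UNIV. x' \<alpha> i) + (\<Sum>\<alpha>\<in>UNIV. (if f i = \<alpha> then 1 else 0))"
      using xx[OF i] by (simp add: sum.distrib)
    thus "(\<Sum>\<alpha>\<in>UNIV. x' \<alpha> i) = M" using Suc.prems(2)[OF i] by simp
  qed
  then obtain fs where fs: "length fs = M" "\<forall>f\<in>set fs. \<forall>\<alpha>. card {i\<in>\<Gamma>. f i = \<alpha>} = kk \<alpha>"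
     "\<forall>\<alpha>. \<forall>i\<in>\<Gamma>. x' \<alpha> i = length (filter (\<lambda>f. f i = \<alpha>) fs)" by blast
  show ?case
    by (rule exI[of _ "f # fs"]) (use fs f xx in auto)
qed


lemma count_sum:
  assumes "finite A" "set ys \<subseteq> A"
  shows "(\<Sum>a\<in>{a\<in>A. P a}. count_list ys a) = length (filter P ys)"
  using assms(2)
proof (induction ys)
  case Nil then show ?case by simp
next
  case (Cons y ys)
  have fin: "finite {a\<in>A. P a}" using assms(1) by simp
  have "(\<Sum>a\<in>{a\<in>A. P a}. count_list (y#ys) a)
      = (\<Sum>a\<in>{a\<in>A. P a}. count_list ys a) + (\<Sum>a\<in>{a\<in>A. P a}. if y = a then 1 else 0)"
    by (simp add: sum.distrib[symmetric] del: sum.delta') (intro sum.cong, auto)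
  also have "(\<Sum>a\<in>{a\<in>A. P a}. if y = a then 1 else 0::nat) = (if P y then 1 else 0)"
    using Cons.prems fin by simp
  finally show ?case using Cons by simp
qed

lemma finite_CCk:
  fixes \<Gamma> :: "'i set" and k :: "'a::{ring_1,finite} \<Rightarrow> nat"
  assumes "finite \<Gamma>"
  shows "finite (CCk \<Gamma> k)"
proof -
  have "CCk \<Gamma> k \<subseteq> (\<lambda>f i. if i \<in> \<Gamma> then f i else 0) ` (\<Gamma> \<rightarrow>\<^sub>E (UNIV::'a set))"
  proof
    fix a assume "a \<in> CCk \<Gamma> k"
    hence z: "\<forall>i. i \<notin> \<Gamma> \<longrightarrow> a i = 0" unfolding CCk_def CC_def by auto
    have "a = (\<lambda>i. if i \<in> \<Gamma> then restrict a \<Gamma> i else 0)" using z by auto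
    moreover have "restrict a \<Gamma> \<in> \<Gamma> \<rightarrow>\<^sub>E UNIV" by simp
    ultimately show "a \<in> (\<lambda>f i. if i \<in> \<Gamma> then f i else 0) ` (\<Gamma> \<rightarrow>\<^sub>E (UNIV::'a set))" by blast
  qed
  moreover have "finite (\<Gamma> \<rightarrow>\<^sub>E (UNIV::'a set))" using assms by (simp add: finite_PiE)
  ultimately show ?thesis using finite_subset by blast
qed

lemma sum_group_vals:
  fixes f :: "'i \<Rightarrow> 'a::{ring_1,finite}"
  assumes "finite \<Gamma>"
  shows "(\<Sum>i\<in>\<Gamma>. f i) = (\<Sum>\<alpha>\<in>UNIV. rep_add \<alpha> (card {i\<in>\<Gamma>. f i = \<alpha>}))"
proof -
  have "(\<Sum>i\<in>\<Gamma>. f i) = (\<Sum>\<alpha>\<in>UNIV. \<Sum>i\<in>{i. i \<in> \<Gamma> \<and> f i = \<alpha>}. f i)"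
    using sum.group[OF assms finite_UNIV, of f f] by simp
  also have "\<dots> = (\<Sum>\<alpha>\<in>UNIV. \<Sum>i\<in>{i. i \<in> \<Gamma> \<and> f i = \<alpha>}. \<alpha>)"
    by (intro sum.cong) auto
  also have "\<dots> = (\<Sum>\<alpha>\<in>UNIV. rep_add \<alpha> (card {i\<in>\<Gamma>. f i = \<alpha>}))"
    unfolding rep_add_def by simp
  finally show ?thesis .
qed

theorem proposition3:
  fixes M :: nat and k :: "'a::{ring_1,finite} \<Rightarrow> nat" and \<Gamma> :: "'i set"
    and x :: "'a \<Rightarrow> 'i \<Rightarrow> nat"
  assumes "finite \<Gamma>"
    and "(\<Sum>\<alpha>\<in>UNIV - {0}. rep_add \<alpha> (k \<alpha>)) = 0"
    and "\<And>\<alpha>. \<alpha> \<noteq> 0 \<Longrightarrow> (\<Sum>i\<in>\<Gamma>. x \<alpha> i) = k \<alpha> * M"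
    and "\<And>i. i \<in> \<Gamma> \<Longrightarrow> (\<Sum>\<alpha>\<in>UNIV - {0}. x \<alpha> i) \<le> M"
  shows "\<exists>w :: ('i \<Rightarrow> 'a) \<Rightarrow> nat.
           (\<Sum>a\<in>CCk \<Gamma> k. w a) = M \<and>
           (\<forall>\<alpha> i. \<alpha> \<noteq> 0 \<longrightarrow> i \<in> \<Gamma> \<longrightarrow> x \<alpha> i = (\<Sum>a\<in>{a\<in>CCk \<Gamma> k. a i = \<alpha>}. w a))"
proof (cases "M = 0")
  case True
  have "\<And>\<alpha> i. \<alpha> \<noteq> 0 \<Longrightarrow> i \<in> \<Gamma> \<Longrightarrow> x \<alpha> i = 0"
    using assms(3) True assms(1) by simp
  thus ?thesis using True by (intro exI[of _ "\<lambda>_. 0"]) auto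
next
  case False
  note fin = assms(1)
  define K where "K = (\<Sum>\<alpha>\<in>UNIV - {0}. k \<alpha>)"
  have "K * M = (\<Sum>\<alpha>\<in>UNIV - {0}. \<Sum>i\<in>\<Gamma>. x \<alpha> i)"
    unfolding K_def sum_distrib_right using assms(3) by simp
  also have "\<dots> = (\<Sum>i\<in>\<Gamma>. \<Sum>\<alpha>\<in>UNIV - {0}. x \<alpha> i)" by (rule sum.swap)
  also have "\<dots> \<le> (\<Sum>i\<in>\<Gamma>. M)" using assms(4) by (intro sum_mono) auto
  finally have KM: "K * M \<le> card \<Gamma> * M" by simp
  hence Kle: "K \<le> card \<Gamma>" using False by simp
  define c where "c i = (\<Sum>\<alpha>\<in>UNIV - {0}. x \<alpha> i)" for i
  define kk where "kk \<alpha> = (if \<alpha> = 0 then card \<Gamma> - K else k \<alpha>)" for \<alpha>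
  define x' where "x' \<alpha> i = (if \<alpha> = 0 then M - c i else x \<alpha> i)" for \<alpha> i
  have row: "(\<Sum>i\<in>\<Gamma>. x' \<alpha> i) = kk \<alpha> * M" for \<alpha>
  proof (cases "\<alpha> = 0")
    case True
    have "(\<Sum>i\<in>\<Gamma>. M - c i) + (\<Sum>i\<in>\<Gamma>. c i) = (\<Sum>i\<in>\<Gamma>. M)"
      unfolding sum.distrib[symmetric] using assms(4) unfolding c_def by (intro sum.cong) auto
    moreover have "(\<Sum>i\<in>\<Gamma>. c i) = K * M"
      unfolding c_def K_def sum_distrib_right sum.swap[of _ _ \<Gamma>] using assms(3) by simp
    ultimately have "(\<Sum>i\<in>\<Gamma>. M - c i) = card \<Gamma> * M - K * M" by simp
    thus ?thesis using True unfolding x'_def kk_def by (simp add: diff_mult_distrib)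
  qed (simp add: x'_def kk_def assms(3))
  have col: "(\<Sum>\<alpha>\<in>UNIV. x' \<alpha> i) = M" if i: "i \<in> \<Gamma>" for i
  proof -
    have "(\<Sum>\<alpha>\<in>UNIV. x' \<alpha> i) = x' 0 i + (\<Sum>\<alpha>\<in>UNIV - {0}. x' \<alpha> i)"
      by (simp add: sum.remove)
    also have "(\<Sum>\<alpha>\<in>UNIV - {0}. x' \<alpha> i) = c i" unfolding c_def x'_def by (intro sum.cong) auto
    finally show ?thesis using assms(4)[OF i] unfolding x'_def c_def by simp
  qed
  obtain fs where fs: "length fs = M" "\<forall>f\<in>set fs. \<forall>\<alpha>. card {i\<in>\<Gamma>. f i = \<alpha>} = kk \<alpha>"
     "\<forall>\<alpha>. \<forall>i\<in>\<Gamma>. x' \<alpha> i = length (filter (\<lambda>f. f i = \<alpha>) fs)"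
    using decomp[OF fin row col] by blast
  define g where "g f = (\<lambda>i. if i \<in> \<Gamma> then f i else (0::'a))" for f :: "'i \<Rightarrow> 'a"
  have gC: "g f \<in> CCk \<Gamma> k" if f: "f \<in> set fs" for f
  proof -
    have cnt: "card {i\<in>\<Gamma>. g f i = \<alpha>} = kk \<alpha>" for \<alpha>
    proof -
      have "{i\<in>\<Gamma>. g f i = \<alpha>} = {i\<in>\<Gamma>. f i = \<alpha>}" unfolding g_def by auto
      thus ?thesis using fs(2) f by simp
    qed
    have "(\<Sum>i\<in>\<Gamma>. g f i) = (\<Sum>\<alpha>\<in>UNIV. rep_add \<alpha> (kk \<alpha>))"
      using sum_group_vals[OF fin, of "g f"] cnt by simp
    also have "\<dots> = rep_add 0 (kk 0) + (\<Sum>\<alpha>\<in>UNIV - {0}. rep_add \<alpha> (kk \<alpha>))"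
      by (simp add: sum.remove)
    also have "(\<Sum>\<alpha>\<in>UNIV - {0}. rep_add \<alpha> (kk \<alpha>)) = (\<Sum>\<alpha>\<in>UNIV - {0}. rep_add \<alpha> (k \<alpha>))"
      unfolding kk_def by (intro sum.cong) auto
    finally have s0: "(\<Sum>i\<in>\<Gamma>. g f i) = 0" using assms(2) by (simp add: rep_add_def)
    show ?thesis unfolding CCk_def CC_def kappa_def
      using s0 cnt unfolding kk_def by (auto simp: g_def)
  qed
  define w where "w a = count_list (map g fs) a" for a
  have sub: "set (map g fs) \<subseteq> CCk \<Gamma> k" using gC by auto
  have finC: "finite (CCk \<Gamma> k)" using finite_CCk[OF fin] .
  show ?thesis
  proof (intro exI[of _ w] conjI allI impI)
    have "(\<Sum>a\<in>{a\<in>CCk \<Gamma> k. True}. w a) = length (filter (\<lambda>_. True) (map g fs))"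
      unfolding w_def by (rule count_sum[OF finC sub])
    thus "(\<Sum>a\<in>CCk \<Gamma> k. w a) = M" using fs(1) by simp
  next
    fix \<alpha> :: 'a and i :: 'i assume a: "\<alpha> \<noteq> 0" "i \<in> \<Gamma>"
    have "(\<Sum>a\<in>{a\<in>CCk \<Gamma> k. a i = \<alpha>}. w a) = length (filter (\<lambda>a. a i = \<alpha>) (map g fs))"
      unfolding w_def by (rule count_sum[OF finC sub])
    also have "\<dots> = length (filter (\<lambda>f. f i = \<alpha>) fs)"
      using a(2) by (simp add: filter_map o_def g_def)
    also have "\<dots> = x \<alpha> i" using fs(3)[rule_format, OF a(2), of \<alpha>] a(1) unfolding x'_def by simp
    finally show "x \<alpha> i = (\<Sum>a\<in>{a\<in>CCk \<Gamma> k. a i = \<alpha>}. w a)" by simp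
  qed
qed

end
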